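(* Let $Y\subset X$ be a subspace of the reflection space $X$. Then the natural map $\mathrm{Trans}(X)|_{Y}\to \mathrm{Trans}(Y)$ has central kernel.
   Context: A reflection space is a topological space $X$ with continuous $\mu:X\times X\to X$, $(x,y)\mapsto x.y$, satisfying $x.x=x$, $x.(x.y)=y$, $x.(y.z)=(x.y).(x.z)$; it is pointed with base point $o$, and $Y$ is a pointed sub-reflection space containing $o$. The elementary reflection at $x$ is $s_x:y\mapsto x.y$. $\mathrm{Trans}(Y)$ is the group generated by the $s_y\circ s_o$, $y\in Y$ (acting on $Y$), and $\mathrm{Trans}(X)|_{Y}:=\langle s_{y}\circ s_o\in\mathrm{Trans}(X)\mid y\in Y\rangle$ is the subgroup of $\mathrm{Trans}(X)$ generated by the corresponding maps on $X$. The natural map is induced by $s_{y}\circ s_o\mapsto s_y\circ s_o$ (restriction of the action to $Y$). *)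

theory Defs
  imports "HOL-Analysis.Analysis" "HOL-Algebra.Bij" "HOL-Algebra.Generated_Groups"
begin

definition reflection_space :: "('a::topological_space \<Rightarrow> 'a \<Rightarrow> 'a) \<Rightarrow> bool" where
  "reflection_space mu \<longleftrightarrow>
     continuous_on UNIV (\<lambda>p. mu (fst p) (snd p)) \<and>
     (\<forall>x. mu x x = x) \<and>
     (\<forall>x y. mu x (mu x y) = y) \<and>
     (\<forall>x y z. mu x (mu y z) = mu (mu x y) (mu x z))"

definition sub_reflection_space :: "('a \<Rightarrow> 'a \<Rightarrow> 'a) \<Rightarrow> 'a \<Rightarrow> 'a set \<Rightarrow> bool" where
  "sub_reflection_space mu b Y \<longleftrightarrow> b \<in> Y \<and> (\<forall>x\<in>Y. \<forall>y\<in>Y. mu x y \<in> Y)"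

definition srefl :: "('a \<Rightarrow> 'a \<Rightarrow> 'a) \<Rightarrow> 'a \<Rightarrow> 'a \<Rightarrow> 'a" where
  "srefl mu x = (\<lambda>y. mu x y)"

definition TransX_on :: "('a \<Rightarrow> 'a \<Rightarrow> 'a) \<Rightarrow> 'a \<Rightarrow> 'a set \<Rightarrow> ('a \<Rightarrow> 'a) set" where
  "TransX_on mu b Y = generate (BijGroup UNIV) {srefl mu y \<circ> srefl mu b | y. y \<in> Y}"

definition TransY :: "('a \<Rightarrow> 'a \<Rightarrow> 'a) \<Rightarrow> 'a \<Rightarrow> 'a set \<Rightarrow> ('a \<Rightarrow> 'a) set" where
  "TransY mu b Y = generate (BijGroup Y) {restrict (srefl mu y \<circ> srefl mu b) Y | y. y \<in> Y}"

definition nat_map :: "'a set \<Rightarrow> ('a \<Rightarrow> 'a) \<Rightarrow> ('a \<Rightarrow> 'a)" where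
  "nat_map Y g = restrict g Y"

definition nat_kernel :: "('a \<Rightarrow> 'a \<Rightarrow> 'a) \<Rightarrow> 'a \<Rightarrow> 'a set \<Rightarrow> ('a \<Rightarrow> 'a) set" where
  "nat_kernel mu b Y = {g \<in> TransX_on mu b Y. nat_map Y g = \<one>\<^bsub>BijGroup Y\<^esub>}"

end

theory Submission
  imports Defs
begin

lemma restrict_UNIV_eq[simp]: "restrict f UNIV = f"
  by (simp add: restrict_def)

lemma BijU_mult: "f \<in> Bij UNIV \<Longrightarrow> g \<in> Bij UNIV \<Longrightarrow> f \<otimes>\<^bsub>BijGroup UNIV\<^esub> g = f \<circ> g"
  by (auto simp: BijGroup_def compose_def)

lemma BijU_one: "\<one>\<^bsub>BijGroup UNIV\<^esub> = id"
  by (auto simp: BijGroup_def)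

lemma BijU_carrier: "carrier (BijGroup UNIV) = Bij UNIV"
  by (simp add: BijGroup_def)

lemma BijU_iff: "f \<in> Bij UNIV \<longleftrightarrow> bij f"
  by (simp add: Bij_def)

lemma gen_props:
  assumes R: "reflection_space mu"
  shows "bij (srefl mu y \<circ> srefl mu b)"
    and "inv\<^bsub>BijGroup UNIV\<^esub> (srefl mu y \<circ> srefl mu b) = (\<lambda>x. mu b (mu y x))"
proof -
  have inv2: "\<And>x y. mu x (mu x y) = y" using R by (simp add: reflection_space_def)
  let ?h = "srefl mu y \<circ> srefl mu b"
  let ?g = "(\<lambda>x. mu b (mu y x))"
  have a: "\<And>x. ?h (?g x) = x" "\<And>x. ?g (?h x) = x" by (simp_all add: srefl_def inv2)
  show bh: "bij ?h"
  proof (rule o_bij[of ?g])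
    show "?g \<circ> ?h = id" by (rule ext) (simp add: srefl_def inv2)
    show "?h \<circ> ?g = id" by (rule ext) (simp add: srefl_def inv2)
  qed
  have "inv_into UNIV ?h = ?g"
    by (rule ext, rule inv_into_f_eq[OF bij_is_inj[OF bh]]) (simp_all add: srefl_def inv2)
  then show "inv\<^bsub>BijGroup UNIV\<^esub> ?h = ?g"
    using bh by (simp add: inv_BijGroup BijU_iff)
qed

lemma autos:
  assumes R: "reflection_space mu"
  shows "g \<in> generate (BijGroup UNIV) {srefl mu y \<circ> srefl mu b | y. y \<in> Y}
     \<Longrightarrow> bij g \<and> (\<forall>x z. g (mu x z) = mu (g x) (g z))"
proof (induction g rule: generate.induct)
  have dist: "\<And>x y z. mu x (mu y z) = mu (mu x y) (mu x z)" using R by (simp add: reflection_space_def)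
  {
    case one
    then show ?case by (simp add: BijU_one bij_id[unfolded id_def])
  next
    case (incl h)
    then obtain y where h: "h = srefl mu y \<circ> srefl mu b" by auto
    have "\<forall>x z. h (mu x z) = mu (h x) (h z)" by (simp add: h srefl_def dist[of y] dist[of b])
    then show ?case using gen_props(1)[OF R, of y b] h by (simp del: comp_apply)
  next
    case (inv h)
    then obtain y where h: "h = srefl mu y \<circ> srefl mu b" by auto
    have "bij (inv\<^bsub>BijGroup UNIV\<^esub> h)"
      using group.inv_closed[OF group_BijGroup, of h UNIV] gen_props(1)[OF R, of y b]
      by (simp add: h BijU_carrier BijU_iff)
    moreover have "\<forall>x z. (inv\<^bsub>BijGroup UNIV\<^esub> h) (mu x z) = mu ((inv\<^bsub>BijGroup UNIV\<^esub> h) x) ((inv\<^bsub>BijGroup UNIV\<^esub> h) z)"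
    proof (intro allI)
      fix x z
      have "mu b (mu y (mu x z)) = mu (mu b (mu y x)) (mu b (mu y z))"
        using dist[of y x z] dist[of b "mu y x" "mu y z"] by simp
      then show "(inv\<^bsub>BijGroup UNIV\<^esub> h) (mu x z) = mu ((inv\<^bsub>BijGroup UNIV\<^esub> h) x) ((inv\<^bsub>BijGroup UNIV\<^esub> h) z)"
        using gen_props(2)[OF R, of y b] h by simp
    qed
    ultimately show ?case by simp
  next
    case (eng h1 h2)
    then have "bij (h1 \<circ> h2)" by (metis bij_comp)
    moreover have "h1 \<otimes>\<^bsub>BijGroup UNIV\<^esub> h2 = h1 \<circ> h2"
      using eng.IH by (simp add: BijU_mult BijU_iff)
    ultimately show ?case using eng.IH by (simp del: comp_apply) (simp add: comp_def)
  }
qed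

theorem lemma3p2:
  fixes mu :: "'a::topological_space \<Rightarrow> 'a \<Rightarrow> 'a" and b :: 'a and Y :: "'a set"
  assumes "reflection_space mu"
    and "sub_reflection_space mu b Y"
  shows "\<forall>k \<in> nat_kernel mu b Y. \<forall>g \<in> TransX_on mu b Y.
           k \<otimes>\<^bsub>BijGroup UNIV\<^esub> g = g \<otimes>\<^bsub>BijGroup UNIV\<^esub> k"
proof (intro ballI)
  fix k g
  assume k: "k \<in> nat_kernel mu b Y" and g: "g \<in> TransX_on mu b Y"
  have kT: "k \<in> TransX_on mu b Y" and kr: "restrict k Y = \<one>\<^bsub>BijGroup Y\<^esub>"
    using k by (auto simp: nat_kernel_def nat_map_def)
  have kfix: "\<And>y. y \<in> Y \<Longrightarrow> k y = y"
  proof -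
    fix y assume "y \<in> Y"
    then have "restrict k Y y = y" using kr by (simp add: BijGroup_def)
    then show "k y = y" using \<open>y \<in> Y\<close> by simp
  qed
  have bY: "b \<in> Y" using assms(2) by (simp add: sub_reflection_space_def)
  have ka: "bij k" "\<And>x z. k (mu x z) = mu (k x) (k z)"
    using autos[OF assms(1)] kT by (auto simp: TransX_on_def)
  have "g \<in> generate (BijGroup UNIV) {srefl mu y \<circ> srefl mu b | y. y \<in> Y}
        \<Longrightarrow> k \<circ> g = g \<circ> k"
  proof (induction g rule: generate.induct)
    case one
    then show ?case by (simp add: BijU_one bij_id[unfolded id_def])
  next
    case (incl h)
    then obtain y where h: "h = srefl mu y \<circ> srefl mu b" and y: "y \<in> Y" by auto
    show ?case by (rule ext) (simp add: h srefl_def ka kfix y bY)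
  next
    case (inv h)
    then obtain y where h: "h = srefl mu y \<circ> srefl mu b" and y: "y \<in> Y" by auto
    show ?case using gen_props(2)[OF assms(1), of y b]
      by (intro ext) (simp add: h ka kfix y bY)
  next
    case (eng h1 h2)
    have b1: "bij h1" "bij h2"
      using autos[OF assms(1)] eng.hyps by auto
    have "h1 \<otimes>\<^bsub>BijGroup UNIV\<^esub> h2 = h1 \<circ> h2" using b1 by (simp add: BijU_mult BijU_iff)
    then show ?case using eng.IH by (metis comp_assoc)
  qed
  then have c: "k \<circ> g = g \<circ> k" using g by (simp add: TransX_on_def)
  have bg: "bij g" using autos[OF assms(1)] g by (auto simp: TransX_on_def)
  show "k \<otimes>\<^bsub>BijGroup UNIV\<^esub> g = g \<otimes>\<^bsub>BijGroup UNIV\<^esub> k"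
    using c bg ka(1) by (simp add: BijU_mult BijU_iff)
qed

end
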